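(* In a $\$$-bounded contract, for all $\mathcal{A}\subseteq\mathbb{A}$ (possibly infinite), all mempools $\mathcal{P}\subseteq\mathbb{X}$ and all states $s$, there exists a finite $\mathcal{A}_0\subseteq\mathcal{A}$ such that for every $\mathcal{B}$ with $\mathcal{A}_0\subseteq\mathcal{B}\subseteq\mathcal{A}$, $\mathrm{MEV}_{\mathcal{A}_0}(s,\mathcal{P})=\mathrm{MEV}_{\mathcal{B}}(s,\mathcal{P})$.
   Context: Fix a countably infinite set $\mathbb{A}$ of actors, a set $\mathbb{T}$ of token types and a set $\mathbb{X}$ of transactions. A wallet is a function $\mathbb{T}\to\mathbb{N}$; $\mathbb{W}_{\mathrm{fin}}$ is the set of finite-support wallets. A wallet state is $W:\mathbb{A}\to(\mathbb{T}\to\mathbb{N})$ satisfying the finite tokens axiom $\sum_{\tau}\sum_{a\in\mathbb{A}}W(a)(\tau)\in\mathbb{N}$. A contract consists of blockchain states $\mathbb{S}=\mathbb{C}\times\mathbb{W}$ (contract state, wallet state), a partial transition function $\mapsto:(\mathbb{S}\times\mathbb{X})\rightharpoonup\mathbb{S}$ and initial states $\mathbb{S}_0$. A transaction $x$ is valid in $s$ if $s\xmapsto{x}s'$ for some $s'$. For finite sequences, $s\xrightarrow{\varepsilon}s$, and $s\xrightarrow{\vec{Y}x}s'$ iff either $s\xrightarrow{\vec{Y}}s''\xmapsto{x}s'$, or $s\xrightarrow{\vec{Y}}s'$ and $x$ is not valid in $s'$. States are assumed reachable from $\mathbb{S}_0$. $W_{\mathcal{A}}(s)=\sum_{a\in\mathcal{A}}W(s)(a)$.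 A wealth function is an additive map $\$:\mathbb{W}_{\mathrm{fin}}\to\mathbb{N}$; $\$_{\mathcal{A}}(s)=\$(W_{\mathcal{A}}(s))$; the gain is $G_{\mathcal{A}}(s,\vec{X})=\$_{\mathcal{A}}(s')-\$_{\mathcal{A}}(s)$ where $s\xrightarrow{\vec X}s'$. The contract is $\$$-bounded if for every $s_0\in\mathbb{S}_0$ there is $n$ such that $\$_{\mathbb{A}}(s)<n$ for all $s$ reachable from $s_0$. A transaction deducibility function $\kappa:\mathcal{P}(\mathbb{A})\times\mathcal{P}(\mathbb{X})\to\mathcal{P}(\mathbb{X})$, $(\mathcal{A},\mathcal{X})\mapsto\kappa_{\mathcal{A}}(\mathcal{X})$, satisfies: extensivity $\mathcal{X}\subseteq\kappa_{\mathcal{A}}(\mathcal{X})$; idempotence $\kappa_{\mathcal{A}}(\kappa_{\mathcal{A}}(\mathcal{X}))=\kappa_{\mathcal{A}}(\mathcal{X})$; monotonicity in both arguments; continuity $\kappa_{\mathcal{A}}(\bigcup_i\mathcal{X}_i)=\bigcup_i\kappa_{\mathcal{A}}(\mathcal{X}_i)$ for increasing chains; finite causes (every finite $\mathcal{X}_0$ is contained in $\kappa_{\mathcal{A}_0}(\emptyset)$ for some finite $\mathcal{A}_0$); private knowledge ($\kappa_{\mathcal{A}}(\emptyset)\subseteq\kappa_{\mathcal{A}'}(\emptyset)$ implies $\mathcal{A}\subseteq\mathcal{A}'$); no shared secrets ($\kappa_{\mathcal{A}}(\mathcal{X})\cap\kappa_{\mathcal{B}}(\mathcal{X})\subseteq\kappa_{\mathcal{A}\cap\mathcal{B}}(\mathcal{X})$).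 $\mathcal{X}^*$ denotes finite sequences over $\mathcal{X}$. The unrealized gain is $\mathrm{uG}_{\mathcal{A}}(s)=\max\{G_{\mathcal{A}}(s,\vec{Y}):\vec{Y}\in\kappa_{\mathcal{A}}(\emptyset)^*\}$; the external gain is $\mathrm{xG}_{\mathcal{A}}(s,\vec{Y})=G_{\mathcal{A}}(s,\vec{Y})-\mathrm{uG}_{\mathcal{A}}(s)$; $\mathrm{MEV}_{\mathcal{A}}(s,\mathcal{P})=\max\{\mathrm{xG}_{\mathcal{A}}(s,\vec{Y}):\vec{Y}\in\kappa_{\mathcal{A}}(\mathcal{P})^*\}$. *)

theory Defs
  imports Main "HOL-Library.Countable_Set"
begin

text \<open>Blockchain states are pairs (contract state, wallet state); a wallet state
maps actors to wallets (token type to amount). The transition function is partial.\<close>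

type_synonym ('c,'a,'t) bstate = "'c \<times> ('a \<Rightarrow> 't \<Rightarrow> nat)"

definition wal :: "('c,'a,'t) bstate \<Rightarrow> 'a \<Rightarrow> 't \<Rightarrow> nat" where
  "wal s = snd s"

text \<open>Finite tokens axiom: the total number of tokens is a natural number.\<close>
definition finite_tokens :: "('a \<Rightarrow> 't \<Rightarrow> nat) \<Rightarrow> bool" where
  "finite_tokens W \<longleftrightarrow> finite {(a,\<tau>). W a \<tau> \<noteq> 0}"

definition fin_wallet :: "('t \<Rightarrow> nat) \<Rightarrow> bool" where
  "fin_wallet w \<longleftrightarrow> finite {\<tau>. w \<tau> \<noteq> 0}"

definition wealth_fun :: "(('t \<Rightarrow> nat) \<Rightarrow> nat) \<Rightarrow> bool" where
  "wealth_fun wlth \<longleftrightarrow> (\<forall>w w'. fin_wallet w \<longrightarrow> fin_wallet w' \<longrightarrow> wlth (\<lambda>\<tau>. w \<tau> + w' \<tau>) = wlth w + wlth w')"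

definition step1 :: "('s \<Rightarrow> 'x \<Rightarrow> 's option) \<Rightarrow> 's \<Rightarrow> 'x \<Rightarrow> 's" where
  "step1 tr s x = (case tr s x of Some s' \<Rightarrow> s' | None \<Rightarrow> s)"

definition exec :: "('s \<Rightarrow> 'x \<Rightarrow> 's option) \<Rightarrow> 's \<Rightarrow> 'x list \<Rightarrow> 's" where
  "exec tr s xs = foldl (step1 tr) s xs"

inductive reachable_from :: "('s \<Rightarrow> 'x \<Rightarrow> 's option) \<Rightarrow> 's \<Rightarrow> 's \<Rightarrow> bool"
  for tr where
  refl: "reachable_from tr s s"
| step: "reachable_from tr s0 s \<Longrightarrow> tr s x = Some s' \<Longrightarrow> reachable_from tr s0 s'"

definition reachable :: "('s \<Rightarrow> 'x \<Rightarrow> 's option) \<Rightarrow> 's set \<Rightarrow> 's \<Rightarrow> bool" where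
  "reachable tr S0 s \<longleftrightarrow> (\<exists>s0\<in>S0. reachable_from tr s0 s)"

text \<open>Joint wallet W_A(s) of a (possibly infinite) set of actors; only finitely many
summands are nonzero by the finite tokens axiom.\<close>
definition WA :: "'a set \<Rightarrow> ('c,'a,'t) bstate \<Rightarrow> 't \<Rightarrow> nat" where
  "WA A s = (\<lambda>\<tau>. \<Sum>a\<in>{a\<in>A. wal s a \<tau> \<noteq> 0}. wal s a \<tau>)"

definition wealthA :: "(('t \<Rightarrow> nat) \<Rightarrow> nat) \<Rightarrow> 'a set \<Rightarrow> ('c,'a,'t) bstate \<Rightarrow> nat" where
  "wealthA wlth A s = wlth (WA A s)"

definition gain :: "(('c,'a,'t) bstate \<Rightarrow> 'x \<Rightarrow> ('c,'a,'t) bstate option) \<Rightarrow> (('t \<Rightarrow> nat) \<Rightarrow> nat)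
    \<Rightarrow> 'a set \<Rightarrow> ('c,'a,'t) bstate \<Rightarrow> 'x list \<Rightarrow> int" where
  "gain tr wlth A s xs = int (wealthA wlth A (exec tr s xs)) - int (wealthA wlth A s)"

definition bounded_contract :: "(('c,'a,'t) bstate \<Rightarrow> 'x \<Rightarrow> ('c,'a,'t) bstate option)
    \<Rightarrow> ('c,'a,'t) bstate set \<Rightarrow> (('t \<Rightarrow> nat) \<Rightarrow> nat) \<Rightarrow> bool" where
  "bounded_contract tr S0 wlth \<longleftrightarrow>
     (\<forall>s0\<in>S0. \<exists>n. \<forall>s. reachable_from tr s0 s \<longrightarrow> wealthA wlth UNIV s < n)"

definition deducibility :: "('a set \<Rightarrow> 'x set \<Rightarrow> 'x set) \<Rightarrow> bool" where
  "deducibility \<kappa> \<longleftrightarrow>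
     (\<forall>A X. X \<subseteq> \<kappa> A X)
   \<and> (\<forall>A X. \<kappa> A (\<kappa> A X) = \<kappa> A X)
   \<and> (\<forall>A A' X X'. A \<subseteq> A' \<longrightarrow> X \<subseteq> X' \<longrightarrow> \<kappa> A X \<subseteq> \<kappa> A' X')
   \<and> (\<forall>A (Xs :: nat \<Rightarrow> 'x set). (\<forall>i. Xs i \<subseteq> Xs (Suc i)) \<longrightarrow>
          \<kappa> A (\<Union>i. Xs i) = (\<Union>i. \<kappa> A (Xs i)))
   \<and> (\<forall>X0. finite X0 \<longrightarrow> (\<exists>A0. finite A0 \<and> X0 \<subseteq> \<kappa> A0 {}))
   \<and> (\<forall>A A'. \<kappa> A {} \<subseteq> \<kappa> A' {} \<longrightarrow> A \<subseteq> A')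
   \<and> (\<forall>A B X. \<kappa> A X \<inter> \<kappa> B X \<subseteq> \<kappa> (A \<inter> B) X)"

text \<open>The maxima are taken as suprema
(in int); in a bounded contract these sets are nonempty, bounded above sets of
integers, so the supremum is attained and equals the maximum.\<close>
definition uG where
  "uG tr wlth \<kappa> A s = Sup {gain tr wlth A s ys | ys. set ys \<subseteq> \<kappa> A {}}"

definition xG where
  "xG tr wlth \<kappa> A s ys = gain tr wlth A s ys - uG tr wlth \<kappa> A s"

definition MEV where
  "MEV tr wlth \<kappa> A s P = Sup {xG tr wlth \<kappa> A s ys | ys. set ys \<subseteq> \<kappa> A P}"

end

theory Submission
  imports Defs
begin


lemma int_Sup_mem:
  fixes X :: "int set"
  assumes "X \<noteq> {}" "bdd_above X"
  shows "Sup X \<in> X"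
proof (rule ccontr)
  assume "Sup X \<notin> X"
  have "x \<le> Sup X - 1" if "x \<in> X" for x
  proof -
    have "x \<le> Sup X" using cSup_upper[OF that assms(2)] .
    moreover have "x \<noteq> Sup X" using that \<open>Sup X \<notin> X\<close> by auto
    ultimately show ?thesis by simp
  qed
  then have "Sup X \<le> Sup X - 1" using cSup_least[OF assms(1)] by blast
  then show False by simp
qed

lemma generic:
  fixes g :: "'a set \<Rightarrow> 'x list \<Rightarrow> int" and Q :: "'a set \<Rightarrow> 'x set"
  assumes Qmono: "\<And>B B'. B \<subseteq> B' \<Longrightarrow> Q B \<subseteq> Q B'"
    and Qfin: "\<And>ys. set ys \<subseteq> Q A \<Longrightarrow> \<exists>A1. finite A1 \<and> A1 \<subseteq> A \<and> set ys \<subseteq> Q A1"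
    and bound: "\<And>B ys. g B ys \<le> N"
    and finH: "finite H"
    and gmono: "\<And>B B' ys. B \<subseteq> B' \<Longrightarrow> (B' - B) \<inter> H = {} \<Longrightarrow> g B ys \<le> g B' ys"
    and gsupp: "\<And>ys. \<exists>K. finite K \<and> (\<forall>B B'. B \<subseteq> B' \<longrightarrow> (B' - B) \<inter> K = {} \<longrightarrow> g B ys = g B' ys)"
  shows "\<exists>A0. finite A0 \<and> A0 \<subseteq> A \<and> A \<inter> H \<subseteq> A0 \<and>
     (\<forall>B. A0 \<subseteq> B \<and> B \<subseteq> A \<longrightarrow> Sup {g B ys | ys. set ys \<subseteq> Q B} = Sup {g A ys | ys. set ys \<subseteq> Q A})"
proof -
  define S where "S B = {g B ys | ys. set ys \<subseteq> Q B}" for B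
  have ne: "S B \<noteq> {}" for B
  proof -
    have "g B [] \<in> S B" unfolding S_def by auto
    then show ?thesis by blast
  qed
  have bd: "bdd_above (S B)" for B
    by (rule bdd_aboveI[where M=N]) (auto simp: S_def bound)
  have "Sup (S A) \<in> S A" by (rule int_Sup_mem[OF ne bd])
  then obtain ys where ys: "set ys \<subseteq> Q A" "g A ys = Sup (S A)" unfolding S_def by auto
  obtain A1 where A1: "finite A1" "A1 \<subseteq> A" "set ys \<subseteq> Q A1" using Qfin[OF ys(1)] by blast
  obtain K where K: "finite K" "\<And>B B'. B \<subseteq> B' \<Longrightarrow> (B' - B) \<inter> K = {} \<Longrightarrow> g B ys = g B' ys"
    using gsupp[of ys] by blast
  define A0 where "A0 = A1 \<union> (A \<inter> H) \<union> (A \<inter> K)"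
  have "finite A0" unfolding A0_def using A1 K finH by auto
  moreover have "A0 \<subseteq> A" "A \<inter> H \<subseteq> A0" unfolding A0_def using A1 by auto
  moreover have "Sup (S B) = Sup (S A)" if B: "A0 \<subseteq> B" "B \<subseteq> A" for B
  proof (rule cSup_eq_maximum)
    have "set ys \<subseteq> Q B" using A1 B Qmono unfolding A0_def by blast
    then have m: "g B ys \<in> S B" unfolding S_def by blast
    have "g B ys = g A ys" using K(2)[of B A] B unfolding A0_def by blast
    then show "Sup (S A) \<in> S B" using m ys(2) by simp
  next
    fix x assume "x \<in> S B"
    then obtain zs where zs: "set zs \<subseteq> Q B" "x = g B zs" unfolding S_def by auto
    have "g B zs \<le> g A zs" using gmono[of B A zs] B unfolding A0_def by blast
    moreover have "g A zs \<in> S A" using zs Qmono[OF B(2)] unfolding S_def by blast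
    ultimately show "x \<le> Sup (S A)" using zs cSup_upper[OF _ bd] by force
  qed
  ultimately have "finite A0 \<and> A0 \<subseteq> A \<and> A \<inter> H \<subseteq> A0 \<and>
     (\<forall>B. A0 \<subseteq> B \<and> B \<subseteq> A \<longrightarrow> Sup (S B) = Sup (S A))" by blast
  then show ?thesis unfolding S_def by (intro exI[of _ A0])
qed


lemma Sup_shift:
  fixes f :: "'b \<Rightarrow> int"
  assumes "R yz" "\<And>y. R y \<Longrightarrow> f y \<le> N"
  shows "Sup {f y - c | y. R y} = Sup {f y | y. R y} - c"
proof -
  let ?S = "{f y | y. R y}"
  have ne: "?S \<noteq> {}" using assms(1) by blast
  have bd: "bdd_above ?S" by (rule bdd_aboveI[where M=N]) (auto simp: assms(2))
  have "Sup ?S \<in> ?S" using int_Sup_mem[OF ne bd] .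
  then obtain y1 where y1: "R y1" "f y1 = Sup ?S" by auto
  show ?thesis
  proof (rule cSup_eq_maximum)
    show "Sup ?S - c \<in> {f y - c | y. R y}" using y1 by (metis (mono_tags, lifting) mem_Collect_eq)
  next
    fix x assume "x \<in> {f y - c | y. R y}"
    then obtain y where "R y" "x = f y - c" by auto
    moreover have "f y \<le> Sup ?S" using cSup_upper[OF _ bd] \<open>R y\<close> by blast
    ultimately show "x \<le> Sup ?S - c" by simp
  qed
qed

definition hold :: "('c,'a,'t) bstate \<Rightarrow> 'a set" where
  "hold s = {a. \<exists>\<tau>. wal s a \<tau> \<noteq> 0}"

lemma fin_hold: "finite_tokens (wal s) \<Longrightarrow> finite (hold s)"
proof -
  assume "finite_tokens (wal s)"
  then have "finite (fst ` {(a,\<tau>). wal s a \<tau> \<noteq> 0})" unfolding finite_tokens_def by blast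
  moreover have "hold s = fst ` {(a,\<tau>). wal s a \<tau> \<noteq> 0}" unfolding hold_def by force
  ultimately show ?thesis by simp
qed

lemma fin_WA: "finite_tokens (wal s) \<Longrightarrow> fin_wallet (WA B s)"
proof -
  assume "finite_tokens (wal s)"
  then have f: "finite (snd ` {(a,\<tau>). wal s a \<tau> \<noteq> 0})" unfolding finite_tokens_def by blast
  have "{\<tau>. WA B s \<tau> \<noteq> 0} \<subseteq> snd ` {(a,\<tau>). wal s a \<tau> \<noteq> 0}"
  proof
    fix \<tau> assume "\<tau> \<in> {\<tau>. WA B s \<tau> \<noteq> 0}"
    then have nz: "WA B s \<tau> \<noteq> 0" by simp
    have "{a\<in>B. wal s a \<tau> \<noteq> 0} \<noteq> {}"
    proof
      assume "{a\<in>B. wal s a \<tau> \<noteq> 0} = {}"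
      then have "WA B s \<tau> = 0" unfolding WA_def by simp
      then show False using nz by simp
    qed
    then obtain a where "wal s a \<tau> \<noteq> 0" by blast
    then show "\<tau> \<in> snd ` {(a,\<tau>). wal s a \<tau> \<noteq> 0}" by force
  qed
  then show ?thesis unfolding fin_wallet_def using f finite_subset by blast
qed

lemma WA_Un:
  assumes "finite_tokens (wal s)" "B \<inter> C = {}"
  shows "WA (B \<union> C) s = (\<lambda>\<tau>. WA B s \<tau> + WA C s \<tau>)"
proof
  fix \<tau>
  have h: "finite (hold s)" using fin_hold[OF assms(1)] .
  have fB: "finite {a\<in>B. wal s a \<tau> \<noteq> 0}" by (rule finite_subset[OF _ h]) (auto simp: hold_def)
  have fC: "finite {a\<in>C. wal s a \<tau> \<noteq> 0}" by (rule finite_subset[OF _ h]) (auto simp: hold_def)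
  have eq: "{a\<in>B \<union> C. wal s a \<tau> \<noteq> 0} = {a\<in>B. wal s a \<tau> \<noteq> 0} \<union> {a\<in>C. wal s a \<tau> \<noteq> 0}" by auto
  show "WA (B \<union> C) s \<tau> = WA B s \<tau> + WA C s \<tau>"
    unfolding WA_def eq using sum.union_disjoint[OF fB fC] assms(2) by auto
qed

lemma WA_zero: "C \<inter> hold s = {} \<Longrightarrow> WA C s = (\<lambda>_. 0)"
proof
  fix \<tau> assume "C \<inter> hold s = {}"
  then have "{a\<in>C. wal s a \<tau> \<noteq> 0} = {}" unfolding hold_def by blast
  then show "WA C s \<tau> = 0" unfolding WA_def by simp
qed

lemma wlth0:
  fixes w :: "('t \<Rightarrow> nat) \<Rightarrow> nat"
  shows "wealth_fun w \<Longrightarrow> w (\<lambda>_. 0) = 0"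
proof -
  assume "wealth_fun w"
  moreover have "fin_wallet (\<lambda>_::'t. 0::nat)" unfolding fin_wallet_def by simp
  ultimately have "w (\<lambda>\<tau>::'t. 0 + 0) = w (\<lambda>_. 0) + w (\<lambda>_. 0)" unfolding wealth_fun_def by blast
  then show ?thesis by simp
qed

lemma wealth_Un:
  assumes "wealth_fun w" "finite_tokens (wal s)" "B \<inter> C = {}"
  shows "wealthA w (B \<union> C) s = wealthA w B s + wealthA w C s"
  unfolding wealthA_def WA_Un[OF assms(2,3)]
  using assms(1) fin_WA[OF assms(2)] unfolding wealth_fun_def by blast

lemma reach_from_exec: "reachable_from tr s0 s \<Longrightarrow> reachable_from tr s0 (exec tr s ys)"
proof (induction ys arbitrary: s)
  case Nil then show ?case by (simp add: exec_def)
next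
  case (Cons y ys)
  have "reachable_from tr s0 (step1 tr s y)"
    using Cons.prems by (cases "tr s y") (auto simp: step1_def intro: reachable_from.step)
  then have "reachable_from tr s0 (exec tr (step1 tr s y) ys)" by (rule Cons.IH)
  then show ?case by (simp add: exec_def)
qed

theorem mainTheorem13:
  fixes tr :: "('c,'a,'t) bstate \<Rightarrow> 'x \<Rightarrow> ('c,'a,'t) bstate option"
    and S0 :: "('c,'a,'t) bstate set"
    and wlth :: "('t \<Rightarrow> nat) \<Rightarrow> nat"
    and \<kappa> :: "'a set \<Rightarrow> 'x set \<Rightarrow> 'x set"
  assumes actors: "countable (UNIV :: 'a set)" "infinite (UNIV :: 'a set)"
    and ftok: "\<And>s. reachable tr S0 s \<Longrightarrow> finite_tokens (wal s)"
    and wealth: "wealth_fun wlth"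
    and kappa: "deducibility \<kappa>"
    and bnd: "bounded_contract tr S0 wlth"
  shows "\<forall>A P s. reachable tr S0 s \<longrightarrow>
           (\<exists>A0. A0 \<subseteq> A \<and> finite A0 \<and>
              (\<forall>B. A0 \<subseteq> B \<and> B \<subseteq> A \<longrightarrow> MEV tr wlth \<kappa> A0 s P = MEV tr wlth \<kappa> B s P))"
proof (intro allI impI)
  fix A :: "'a set" and P :: "'x set" and s
  assume rs: "reachable tr S0 s"
  then obtain s0 where s0: "s0 \<in> S0" "reachable_from tr s0 s" unfolding reachable_def by blast
  obtain n where n: "\<And>s'. reachable_from tr s0 s' \<Longrightarrow> wealthA wlth UNIV s' < n"
    using bnd s0(1) unfolding bounded_contract_def by blast
  have rex: "reachable_from tr s0 (exec tr s ys)" for ys using reach_from_exec[OF s0(2)] .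
  have ftx: "finite_tokens (wal (exec tr s ys))" for ys
    using ftok rex s0(1) unfolding reachable_def by blast
  have fts: "finite_tokens (wal s)" using ftok rs .
  define g where "g B ys = gain tr wlth B s ys" for B ys
  have bound: "g B ys \<le> int n" for B ys
  proof -
    have "wealthA wlth UNIV (exec tr s ys) = wealthA wlth B (exec tr s ys) + wealthA wlth (-B) (exec tr s ys)"
      using wealth_Un[OF wealth ftx, of B "-B" ys] by simp
    then have "wealthA wlth B (exec tr s ys) < n" using n[OF rex, of ys] by simp
    then show ?thesis unfolding g_def gain_def by simp
  qed
  have split: "g B' ys = g B ys + int (wealthA wlth (B' - B) (exec tr s ys))"
    if "B \<subseteq> B'" "(B' - B) \<inter> hold s = {}" for B B' ys
  proof -
    have e: "B \<union> (B' - B) = B'" using that(1) by blast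
    have d: "B \<inter> (B' - B) = {}" by blast
    have z: "wealthA wlth (B' - B) s = 0" unfolding wealthA_def using WA_zero[OF that(2)] wlth0[OF wealth] by simp
    have "wealthA wlth B' s = wealthA wlth B s" using wealth_Un[OF wealth fts d] z unfolding e by simp
    moreover have "wealthA wlth B' (exec tr s ys) = wealthA wlth B (exec tr s ys) + wealthA wlth (B' - B) (exec tr s ys)"
      using wealth_Un[OF wealth ftx d] unfolding e by simp
    ultimately show ?thesis unfolding g_def gain_def by simp
  qed
  have gmono: "g B ys \<le> g B' ys" if "B \<subseteq> B'" "(B' - B) \<inter> hold s = {}" for B B' ys
    using split[OF that] by simp
  have gsupp: "\<exists>K. finite K \<and> (\<forall>B B'. B \<subseteq> B' \<longrightarrow> (B' - B) \<inter> K = {} \<longrightarrow> g B ys = g B' ys)" for ys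
  proof (intro exI conjI allI impI)
    show "finite (hold s \<union> hold (exec tr s ys))" using fin_hold[OF fts] fin_hold[OF ftx] by simp
  next
    fix B B' :: "'a set" assume a: "B \<subseteq> B'" "(B' - B) \<inter> (hold s \<union> hold (exec tr s ys)) = {}"
    then have "(B' - B) \<inter> hold s = {}" "(B' - B) \<inter> hold (exec tr s ys) = {}" by auto
    then have "wealthA wlth (B' - B) (exec tr s ys) = 0"
      unfolding wealthA_def using WA_zero[OF \<open>(B' - B) \<inter> hold (exec tr s ys) = {}\<close>] wlth0[OF wealth] by simp
    then show "g B ys = g B' ys" using split[OF a(1) \<open>(B' - B) \<inter> hold s = {}\<close>] by simp
  qed
  note kd = kappa[unfolded deducibility_def]
  have km: "\<forall>A A' X X'. A \<subseteq> A' \<longrightarrow> X \<subseteq> X' \<longrightarrow> \<kappa> A X \<subseteq> \<kappa> A' X'"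
    using conjunct1[OF conjunct2[OF conjunct2[OF kd]]] .
  have kc: "\<forall>X0. finite X0 \<longrightarrow> (\<exists>A0. finite A0 \<and> X0 \<subseteq> \<kappa> A0 {})"
    using conjunct1[OF conjunct2[OF conjunct2[OF conjunct2[OF conjunct2[OF kd]]]]] .
  have ks: "\<forall>A B X. \<kappa> A X \<inter> \<kappa> B X \<subseteq> \<kappa> (A \<inter> B) X"
    using conjunct2[OF conjunct2[OF conjunct2[OF conjunct2[OF conjunct2[OF conjunct2[OF kd]]]]]] .
  have kmono: "\<kappa> B X \<subseteq> \<kappa> B' X" if "B \<subseteq> B'" for B B' X
    using km that by auto
  have kfin: "\<exists>A1. finite A1 \<and> A1 \<subseteq> A \<and> set ys \<subseteq> \<kappa> A1 X" if "set ys \<subseteq> \<kappa> A X" for ys X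
  proof -
    have "finite (set ys)" by simp
    then obtain C where C: "finite C" "set ys \<subseteq> \<kappa> C {}" using kc by blast
    have "\<kappa> C {} \<subseteq> \<kappa> C X" using km by auto
    then have "set ys \<subseteq> \<kappa> A X \<inter> \<kappa> C X" using C that by blast
    also have "\<dots> \<subseteq> \<kappa> (A \<inter> C) X" using ks by blast
    finally show ?thesis using C(1) by (intro exI[of _ "A \<inter> C"]) auto
  qed
  have exP: "\<exists>A0. finite A0 \<and> A0 \<subseteq> A \<and> A \<inter> hold s \<subseteq> A0 \<and>
     (\<forall>B. A0 \<subseteq> B \<and> B \<subseteq> A \<longrightarrow> Sup {g B ys | ys. set ys \<subseteq> \<kappa> B P} = Sup {g A ys | ys. set ys \<subseteq> \<kappa> A P})"
    by (rule generic[of "\<lambda>B. \<kappa> B P" A g "int n" "hold s", OF kmono kfin bound fin_hold[OF fts] gmono gsupp])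
  then obtain Ap where Ap0: "finite Ap \<and> Ap \<subseteq> A \<and> A \<inter> hold s \<subseteq> Ap \<and>
     (\<forall>B. Ap \<subseteq> B \<and> B \<subseteq> A \<longrightarrow> Sup {g B ys | ys. set ys \<subseteq> \<kappa> B P} = Sup {g A ys | ys. set ys \<subseteq> \<kappa> A P})" ..
  note Ap = conjunct1[OF Ap0] conjunct1[OF conjunct2[OF Ap0]] conjunct2[OF conjunct2[OF conjunct2[OF Ap0]]]
  have exE': "\<exists>A0. finite A0 \<and> A0 \<subseteq> A \<and> A \<inter> hold s \<subseteq> A0 \<and>
     (\<forall>B. A0 \<subseteq> B \<and> B \<subseteq> A \<longrightarrow> Sup {g B ys | ys. set ys \<subseteq> \<kappa> B {}} = Sup {g A ys | ys. set ys \<subseteq> \<kappa> A {}})"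
    by (rule generic[of "\<lambda>B. \<kappa> B {}" A g "int n" "hold s", OF kmono kfin bound fin_hold[OF fts] gmono gsupp])
  then obtain Ae where Ae0: "finite Ae \<and> Ae \<subseteq> A \<and> A \<inter> hold s \<subseteq> Ae \<and>
     (\<forall>B. Ae \<subseteq> B \<and> B \<subseteq> A \<longrightarrow> Sup {g B ys | ys. set ys \<subseteq> \<kappa> B {}} = Sup {g A ys | ys. set ys \<subseteq> \<kappa> A {}})" ..
  note Ae = conjunct1[OF Ae0] conjunct1[OF conjunct2[OF Ae0]] conjunct2[OF conjunct2[OF conjunct2[OF Ae0]]]
  have mev: "MEV tr wlth \<kappa> B s P = Sup {g B ys | ys. set ys \<subseteq> \<kappa> B P} - Sup {g B ys | ys. set ys \<subseteq> \<kappa> B {}}" for B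
    unfolding MEV_def xG_def uG_def g_def
  proof (rule Sup_shift[where yz="[]" and N="int n"])
    show "set [] \<subseteq> \<kappa> B P" by simp
  next
    fix y show "gain tr wlth B s y \<le> int n" using bound unfolding g_def by blast
  qed
  have eq: "MEV tr wlth \<kappa> B s P = MEV tr wlth \<kappa> A s P" if "Ap \<union> Ae \<subseteq> B" "B \<subseteq> A" for B
  proof -
    have 1: "Ap \<subseteq> B" "Ae \<subseteq> B" using that(1) by auto
    note e1 = mp[OF spec[OF Ap(3), of B] conjI[OF 1(1) that(2)]]
    note e2 = mp[OF spec[OF Ae(3), of B] conjI[OF 1(2) that(2)]]
    show ?thesis unfolding mev e1 e2 ..
  qed
  have f1: "Ap \<union> Ae \<subseteq> A" using Ap(2) Ae(2) by blast
  have f2: "finite (Ap \<union> Ae)" using Ap(1) Ae(1) by blast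
  have f3: "\<forall>B. Ap \<union> Ae \<subseteq> B \<and> B \<subseteq> A \<longrightarrow> MEV tr wlth \<kappa> (Ap \<union> Ae) s P = MEV tr wlth \<kappa> B s P"
  proof (intro allI impI)
    fix B assume h: "Ap \<union> Ae \<subseteq> B \<and> B \<subseteq> A"
    note m1 = eq[OF conjunct1[OF h] conjunct2[OF h]]
    note m2 = eq[OF order_refl f1]
    show "MEV tr wlth \<kappa> (Ap \<union> Ae) s P = MEV tr wlth \<kappa> B s P" using m2 m1 by (rule trans_sym)
  qed
  show "\<exists>A0. A0 \<subseteq> A \<and> finite A0 \<and>
              (\<forall>B. A0 \<subseteq> B \<and> B \<subseteq> A \<longrightarrow> MEV tr wlth \<kappa> A0 s P = MEV tr wlth \<kappa> B s P)"
    by (rule exI[of _ "Ap \<union> Ae"]) (intro conjI f1 f2 f3)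
qed

end
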